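(* Let $D=(D_1,D_2)$ with $D_1\in\mathcal{U}(n,s^p)$ (qualitative factors) and $D_2\in\mathcal{U}(n,2^q)$ (quantitative factors). Then $\mathrm{QQD}^2(D)\ge LB_2$, where $$LB_2=-\left(\frac{5s+1}{4s}\right)^p\left(\frac43\right)^q+\left(\frac{5s+1}{4s}\right)^p\left(\frac{11}{8}\right)^q+\frac{1}{n^2}\left(\frac54\right)^{p+q}\sum_{k=1}^{p+q}\left(\frac15\right)^k\sum_{k_1+k_2=k}\binom{p}{k_1}\binom{q}{k_2}r_{n,k_1,k_2,s,2}\left(1-\frac{r_{n,k_1,k_2,s,2}}{s^{k_1}2^{k_2}}\right),$$ with $r_{n,k_1,k_2,s,2}$ the remainder of $n$ modulo $s^{k_1}2^{k_2}$ (the inner sum over nonnegative integers $k_1,k_2$, with $\binom{p}{k_1}=0$ for $k_1>p$ and $\binom{q}{k_2}=0$ for $k_2>q$).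
   Context: $\mathcal{U}(n,s^p2^q)$: $n\times(p+q)$ matrices whose first $p$ columns each take every value in $\{0,\dots,s-1\}$ equally often (qualitative factors) and whose last $q$ columns each take every value in $\{0,1\}$ equally often (quantitative factors). For quantitative columns a level $x\in\{0,1\}$ is transformed to $(2x+1)/4\in[0,1]$. Let $\chi=\prod_k\chi_k$, $\chi_k=\{0,\dots,s-1\}$ for $k\le p$, $\chi_k=[0,1]$ for $k>p$, and $F$ the uniform distribution on $\chi$. Kernel: $\mathcal{K}(t,z)=\prod_k\mathcal{K}_k(t_k,z_k)$ with $\mathcal{K}_k=(3/2)^{\delta_{t_kz_k}}(5/4)^{1-\delta_{t_kz_k}}$ for $k\le p$ ($\delta$ the Kronecker delta) and $\mathcal{K}_k=\frac32-|t_k-z_k|+|t_k-z_k|^2$ for $k>p$. For $D$ with (transformed) rows $x_1,\dots,x_n$, the squared qualitative-quantitative discrepancy is $\mathrm{QQD}^2(D)=\int_{\chi^2}\mathcal{K}\,dF\,dF-\frac2n\sum_i\int_\chi\mathcal{K}(t,x_i)dF(t)+\frac1{n^2}\sum_{i,j}\mathcal{K}(x_i,x_j)$. *)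

theory Defs
  imports "HOL-Probability.Probability"
begin

text \<open>Designs are n x m matrices D :: nat => nat => nat, D i k = entry in row i < n,
  column k < m (0-indexed). Columns k < p are qualitative (levels 0..s-1),
  columns p <= k < p+q are quantitative (levels 0,1).\<close>

definition balanced_col :: "nat \<Rightarrow> nat \<Rightarrow> (nat \<Rightarrow> nat) \<Rightarrow> bool" where
  "balanced_col n s c \<longleftrightarrow> (\<forall>i<n. c i < s) \<and>
     (\<forall>v<s. \<forall>w<s. card {i. i < n \<and> c i = v} = card {i. i < n \<and> c i = w})"

definition in_U :: "nat \<Rightarrow> nat \<Rightarrow> nat \<Rightarrow> (nat \<Rightarrow> nat \<Rightarrow> nat) \<Rightarrow> bool" where
  "in_U n s m D \<longleftrightarrow> (\<forall>k<m. balanced_col n s (\<lambda>i. D i k))"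

definition design_point :: "nat \<Rightarrow> nat \<Rightarrow> (nat \<Rightarrow> nat \<Rightarrow> nat) \<Rightarrow> (nat \<Rightarrow> nat \<Rightarrow> nat)
     \<Rightarrow> nat \<Rightarrow> (nat \<Rightarrow> real)" where
  "design_point p q D1 D2 i = (\<lambda>k. if k < p then real (D1 i k)
       else if k < p + q then (2 * real (D2 i (k - p)) + 1) / 4 else undefined)"

definition coord_measure :: "nat \<Rightarrow> nat \<Rightarrow> nat \<Rightarrow> real measure" where
  "coord_measure p s k = (if k < p then uniform_count_measure (real ` {0..<s})
                          else uniform_measure lborel {0..1})"

definition F_QQ :: "nat \<Rightarrow> nat \<Rightarrow> nat \<Rightarrow> (nat \<Rightarrow> real) measure" where
  "F_QQ p q s = (\<Pi>\<^sub>M k\<in>{0..<p+q}. coord_measure p s k)"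

definition kernel_QQ :: "nat \<Rightarrow> nat \<Rightarrow> (nat \<Rightarrow> real) \<Rightarrow> (nat \<Rightarrow> real) \<Rightarrow> real" where
  "kernel_QQ p q t z = (\<Prod>k\<in>{0..<p+q}.
      if k < p then (if t k = z k then 3/2 else 5/4)
      else 3/2 - \<bar>t k - z k\<bar> + \<bar>t k - z k\<bar>^2)"

definition QQD2 :: "nat \<Rightarrow> nat \<Rightarrow> nat \<Rightarrow> nat \<Rightarrow> (nat \<Rightarrow> nat \<Rightarrow> nat) \<Rightarrow> (nat \<Rightarrow> nat \<Rightarrow> nat) \<Rightarrow> real" where
  "QQD2 n p q s D1 D2 =
     (let F = F_QQ p q s; K = kernel_QQ p q; x = design_point p q D1 D2 in
      integral\<^sup>L (F \<Otimes>\<^sub>M F) (\<lambda>(t, z). K t z)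
      - 2 / real n * (\<Sum>i<n. integral\<^sup>L F (\<lambda>t. K t (x i)))
      + 1 / (real n)^2 * (\<Sum>i<n. \<Sum>j<n. K (x i) (x j)))"

definition LB2 :: "nat \<Rightarrow> nat \<Rightarrow> nat \<Rightarrow> nat \<Rightarrow> real" where
  "LB2 n p q s =
     - (((5 * real s + 1) / (4 * real s))^p * (4/3)^q)
     + ((5 * real s + 1) / (4 * real s))^p * (11/8)^q
     + 1 / (real n)^2 * (5/4)^(p+q) *
       (\<Sum>k=1..p+q. (1/5)^k * (\<Sum>k1=0..k.
          let k2 = k - k1; r = real (n mod (s^k1 * 2^k2)) in
          real (p choose k1) * real (q choose k2) * r * (1 - r / (real s^k1 * 2^k2))))"

end

theory Submission
  imports Defs
begin

definition kq :: "nat \<Rightarrow> nat \<Rightarrow> real \<Rightarrow> real \<Rightarrow> real" where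
  "kq p k a b = (if k < p then (if a = b then 3/2 else 5/4) else 3/2 - \<bar>a - b\<bar> + \<bar>a - b\<bar>^2)"

lemma kq_nonneg: "0 \<le> kq p k a b"
proof -
  have "3/2 - \<bar>a - b\<bar> + \<bar>a - b\<bar>^2 = (\<bar>a - b\<bar> - 1/2)^2 + 5/4"
    by (simp add: power2_eq_square algebra_simps)
  then have "0 \<le> 3/2 - \<bar>a - b\<bar> + \<bar>a - b\<bar>^2"
    by (metis add_nonneg_nonneg zero_le_power2 zero_le_divide_iff zero_le_numeral)
  then show ?thesis by (auto simp: kq_def)
qed

lemma kq_meas:
  assumes "f \<in> borel_measurable M" "g \<in> borel_measurable M"
  shows "(\<lambda>w. kq p k (f w) (g w)) \<in> borel_measurable M"
proof (cases "k < p")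
  case True
  have "(\<lambda>w. if f w = g w then 3/2 else 5/4::real) \<in> borel_measurable M"
    by (rule measurable_If[OF borel_measurable_const borel_measurable_const borel_measurable_eq[OF assms]])
  then show ?thesis using True by (simp add: kq_def)
next
  case False
  have "(\<lambda>w. 3/2 - \<bar>f w - g w\<bar> + \<bar>f w - g w\<bar>^2 :: real) \<in> borel_measurable M"
    by (intro borel_measurable_add borel_measurable_diff borel_measurable_power borel_measurable_abs borel_measurable_const assms)
  then show ?thesis using False by (simp add: kq_def)
qed

lemma kernel_eq: "kernel_QQ p q t z = (\<Prod>k\<in>{0..<p+q}. kq p k (t k) (z k))"
  unfolding kernel_QQ_def kq_def by simp

lemma coord_borel: "(\<lambda>x. x) \<in> borel_measurable (coord_measure p s k)"
proof (cases "k < p")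
  case True
  then show ?thesis unfolding coord_measure_def
    by (simp add: measurable_cong_sets[OF sets_uniform_count_measure_count_space refl])
next
  case False
  then show ?thesis unfolding coord_measure_def
    by (simp add: measurable_cong_sets[OF sets_uniform_measure refl])
qed

lemma coord_prob:
  assumes "p > 0 \<longrightarrow> s > 0"
  shows "prob_space (coord_measure p s k)"
proof (cases "k < p")
  case True
  then have "s > 0" using assms by auto
  then show ?thesis using True unfolding coord_measure_def
    by (auto intro!: prob_space_uniform_count_measure)
next
  case False
  then show ?thesis unfolding coord_measure_def
    by (auto intro!: prob_space_uniform_measure)
qed

lemma comp_meas:
  assumes "k < p + q"
  shows "(\<lambda>t. t k) \<in> borel_measurable (F_QQ p q s)"
  unfolding F_QQ_def
  by (rule measurable_compose[OF measurable_component_singleton[of k "{0..<p+q}" "coord_measure p s"] coord_borel[of p s k]]) (use assms in auto)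


lemma UC:
  assumes "finite S" "S \<noteq> {}" "\<And>x. x \<in> S \<Longrightarrow> 0 \<le> f x"
  shows "(\<integral>\<^sup>+x. ennreal (f x) \<partial>uniform_count_measure S) = ennreal ((\<Sum>x\<in>S. f x) / card S)"
proof -
  have c: "(1 / of_nat (card S) :: ennreal) = ennreal (1 / real (card S))"
  proof -
    have "real (card S) > 0" using assms by (simp add: card_gt_0_iff)
    then have "ennreal 1 / ennreal (real (card S)) = ennreal (1 / real (card S))"
      by (intro divide_ennreal) auto
    then show ?thesis by (simp add: ennreal_of_nat_eq_real_of_nat)
  qed
  have "(\<integral>\<^sup>+x. ennreal (f x) \<partial>uniform_count_measure S) = (\<Sum>x\<in>S. ennreal (1 / real (card S)) * ennreal (f x))"
    unfolding uniform_count_measure_def using assms(1) c by (simp add: nn_integral_point_measure_finite)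
  also have "\<dots> = (\<Sum>x\<in>S. ennreal (1 / real (card S) * f x))"
    using assms(3) by (intro sum.cong refl) (simp add: ennreal_mult[symmetric])
  also have "\<dots> = ennreal (\<Sum>x\<in>S. 1 / real (card S) * f x)"
    using assms by (intro sum_ennreal) auto
  also have "\<dots> = ennreal ((\<Sum>x\<in>S. f x) / card S)"
    by (simp add: sum_divide_distrib)
  finally show ?thesis .
qed

definition Aq :: "nat \<Rightarrow> real" where "Aq s = (5 * real s + 1) / (4 * real s)"

definition gq :: "real \<Rightarrow> real" where
  "gq z = 3/2 - (z^2 + (1-z)^2)/2 + (z^3 + (1-z)^3)/3"

definition Hk :: "nat \<Rightarrow> nat \<Rightarrow> nat \<Rightarrow> real \<Rightarrow> ennreal" where
  "Hk p s k z = (\<integral>\<^sup>+t. ennreal (kq p k t z) \<partial>coord_measure p s k)"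

lemma Hk_qual:
  assumes "k < p" "s > 0" "z \<in> real ` {0..<s}"
  shows "Hk p s k z = ennreal (Aq s)"
proof -
  let ?S = "real ` {0..<s}"
  have cS: "card ?S = s" by (simp add: card_image)
  have "Hk p s k z = ennreal ((\<Sum>t\<in>?S. kq p k t z) / card ?S)"
    unfolding Hk_def coord_measure_def using assms
    by (simp add: UC kq_nonneg)
  also have "(\<Sum>t\<in>?S. kq p k t z) = (\<Sum>t\<in>?S. 5/4 + (if t = z then 1/4 else 0))"
    using assms(1) by (intro sum.cong refl) (auto simp: kq_def)
  also have "\<dots> = 5/4 * s + 1/4"
    using assms(3) by (simp add: sum.distrib cS)
  finally show ?thesis using assms(2) by (simp add: cS Aq_def field_simps)
qed

lemma Hk_qual_int:
  assumes "k < p" "s > 0"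
  shows "(\<integral>\<^sup>+z. Hk p s k z \<partial>coord_measure p s k) = ennreal (Aq s)"
proof -
  let ?S = "real ` {0..<s}"
  have cS: "card ?S = s" by (simp add: card_image)
  have cm: "coord_measure p s k = uniform_count_measure ?S" using assms by (simp add: coord_measure_def)
  have "(\<integral>\<^sup>+z. Hk p s k z \<partial>coord_measure p s k) = (\<integral>\<^sup>+z. ennreal (Aq s) \<partial>uniform_count_measure ?S)"
    unfolding cm
    by (intro nn_integral_cong) (simp add: space_uniform_count_measure Hk_qual assms)
  also have "\<dots> = ennreal ((\<Sum>z\<in>?S. Aq s) / card ?S)"
    using assms by (intro UC) (auto simp: Aq_def)
  also have "\<dots> = ennreal (Aq s)" using assms by (simp add: cS)
  finally show ?thesis .
qed


lemma quad_nonneg: "0 \<le> 3/2 - (u::real) + u^2"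
proof -
  have "3/2 - u + u^2 = (u - 1/2)^2 + 5/4" by (simp add: power2_eq_square algebra_simps)
  then show ?thesis by (metis add_nonneg_nonneg zero_le_power2 zero_le_divide_iff zero_le_numeral)
qed

lemma split_01:
  fixes e :: "real \<Rightarrow> ennreal"
  assumes "e \<in> borel_measurable borel" "0 \<le> z" "z \<le> 1"
  shows "(\<integral>\<^sup>+t. e t * indicator {0..1} t \<partial>lborel)
       = (\<integral>\<^sup>+t. e t * indicator {0..z} t \<partial>lborel) + (\<integral>\<^sup>+t. e t * indicator {z..1} t \<partial>lborel)"
proof -
  have "(\<integral>\<^sup>+t. e t * indicator {0..1} t \<partial>lborel)
      = (\<integral>\<^sup>+t. e t * indicator {0..z} t + e t * indicator {z..1} t \<partial>lborel)"
  proof (rule nn_integral_cong_AE)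
    show "AE t in lborel. e t * indicator {0..1} t = e t * indicator {0..z} t + e t * indicator {z..1} t"
      using AE_lborel_singleton[of z]
      by eventually_elim (use assms in \<open>auto simp: indicator_def\<close>)
  qed
  also have "\<dots> = (\<integral>\<^sup>+t. e t * indicator {0..z} t \<partial>lborel) + (\<integral>\<^sup>+t. e t * indicator {z..1} t \<partial>lborel)"
    using assms(1) by (intro nn_integral_add) auto
  finally show ?thesis .
qed

lemma coord_quant: "\<not> k < p \<Longrightarrow> coord_measure p s k = uniform_measure lborel {0..1}"
  by (simp add: coord_measure_def)

lemma Hk_quant:
  assumes "\<not> k < p" "0 \<le> z" "z \<le> 1"
  shows "Hk p s k z = ennreal (gq z)"
proof -
  let ?e = "\<lambda>t. ennreal (kq p k t z)"
  have em: "?e \<in> borel_measurable borel"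
    by (intro measurable_compose[OF _ measurable_ennreal] kq_meas) auto
  have "Hk p s k z = (\<integral>\<^sup>+t. ?e t * indicator {0..1} t \<partial>lborel)"
    unfolding Hk_def coord_quant[OF assms(1)]
    using em by (subst nn_integral_uniform_measure) (auto simp: divide_ennreal_def)
  also have "\<dots> = (\<integral>\<^sup>+t. ?e t * indicator {0..z} t \<partial>lborel) + (\<integral>\<^sup>+t. ?e t * indicator {z..1} t \<partial>lborel)"
    using em assms by (intro split_01) auto
  also have "(\<integral>\<^sup>+t. ?e t * indicator {0..z} t \<partial>lborel)
     = (\<integral>\<^sup>+t. ennreal (3/2 - (z - t) + (z - t)^2) * indicator {0..z} t \<partial>lborel)"
    using assms by (intro nn_integral_cong) (auto simp: indicator_def kq_def abs_if power2_eq_square)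
  also have "\<dots> = ennreal ((3/2*z + (z-z)^2/2 - (z-z)^3/3) - (3/2*0 + (z-0)^2/2 - (z-0)^3/3))"
  proof (rule nn_integral_FTC_Icc[where F = "\<lambda>t. 3/2*t + (z-t)^2/2 - (z-t)^3/3"])
    show "(\<lambda>t. 3/2 - (z - t) + (z - t)^2) \<in> borel_measurable borel" by simp
    show "((\<lambda>t. 3/2*t + (z-t)^2/2 - (z-t)^3/3) has_real_derivative 3/2 - (z - t) + (z - t)^2) (at t)" for t
      by (auto intro!: derivative_eq_intros simp: power2_eq_square; algebra)
    show "0 \<le> 3/2 - (z - t) + (z - t)^2" for t using quad_nonneg[of "z - t"] by simp
  qed (use assms in auto)
  also have "(\<integral>\<^sup>+t. ?e t * indicator {z..1} t \<partial>lborel)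
     = (\<integral>\<^sup>+t. ennreal (3/2 - (t - z) + (t - z)^2) * indicator {z..1} t \<partial>lborel)"
    using assms by (intro nn_integral_cong) (auto simp: indicator_def kq_def abs_if power2_eq_square)
  also have "\<dots> = ennreal ((3/2*1 - (1-z)^2/2 + (1-z)^3/3) - (3/2*z - (z-z)^2/2 + (z-z)^3/3))"
  proof (rule nn_integral_FTC_Icc[where F = "\<lambda>t. 3/2*t - (t-z)^2/2 + (t-z)^3/3"])
    show "(\<lambda>t. 3/2 - (t - z) + (t - z)^2) \<in> borel_measurable borel" by simp
    show "((\<lambda>t. 3/2*t - (t-z)^2/2 + (t-z)^3/3) has_real_derivative 3/2 - (t - z) + (t - z)^2) (at t)" for t
      by (auto intro!: derivative_eq_intros simp: power2_eq_square; algebra)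
    show "0 \<le> 3/2 - (t - z) + (t - z)^2" for t using quad_nonneg[of "t - z"] by simp
  qed (use assms in auto)
  also have "ennreal ((3/2*z + (z-z)^2/2 - (z-z)^3/3) - (3/2*0 + (z-0)^2/2 - (z-0)^3/3))
      + ennreal ((3/2*1 - (1-z)^2/2 + (1-z)^3/3) - (3/2*z - (z-z)^2/2 + (z-z)^3/3))
      = ennreal (gq z)"
  proof -
    have a: "0 \<le> (3/2*z + (z-z)^2/2 - (z-z)^3/3) - (3/2*0 + (z-0)^2/2 - (z-0)^3/3)"
    proof -
      have "z^2 \<le> z" using assms mult_right_le_one_le[of z z] by (simp add: power2_eq_square)
      have "z^3 \<ge> 0" using assms by simp
      then show ?thesis using \<open>z^2 \<le> z\<close> assms by (simp; linarith)
    qed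
    have b: "0 \<le> (3/2*1 - (1-z)^2/2 + (1-z)^3/3) - (3/2*z - (z-z)^2/2 + (z-z)^3/3)"
    proof -
      have "(1-z)^2 \<le> 1-z" using assms mult_right_le_one_le[of "1-z" "1-z"] by (simp add: power2_eq_square)
      have "(1-z)^3 \<ge> 0" using assms by simp
      then show ?thesis using \<open>(1-z)^2 \<le> 1-z\<close> assms by (simp; linarith)
    qed
    have eq: "((3/2*z + (z-z)^2/2 - (z-z)^3/3) - (3/2*0 + (z-0)^2/2 - (z-0)^3/3)) + ((3/2*1 - (1-z)^2/2 + (1-z)^3/3) - (3/2*z - (z-z)^2/2 + (z-z)^3/3)) = gq z"
      unfolding gq_def by (simp add: field_simps power2_eq_square power3_eq_cube)
    show ?thesis using a b eq by (simp only: ennreal_plus[symmetric])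
  qed
  finally show ?thesis .
qed

lemma Hk_meas:
  assumes "p > 0 \<longrightarrow> s > 0"
  shows "Hk p s k \<in> borel_measurable borel"
proof -
  interpret prob_space "coord_measure p s k" using coord_prob[OF assms] .
  have "(\<lambda>w. ennreal (kq p k (snd w) (fst w))) \<in> borel_measurable (borel \<Otimes>\<^sub>M coord_measure p s k)"
    by (intro measurable_compose[OF _ measurable_ennreal] kq_meas
        measurable_compose[OF measurable_snd coord_borel])
       (rule measurable_fst'', rule measurable_ident_sets, rule refl)
  then have "case_prod (\<lambda>z t. ennreal (kq p k t z)) \<in> borel_measurable (borel \<Otimes>\<^sub>M coord_measure p s k)"
    by (simp add: split_beta')
  then show ?thesis unfolding Hk_def[abs_def]
    by (rule borel_measurable_nn_integral)
qed

lemma gq_nonneg: "0 \<le> z \<Longrightarrow> z \<le> 1 \<Longrightarrow> 0 \<le> gq z"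
proof -
  assume z: "0 \<le> z" "z \<le> 1"
  have "z^2 \<le> z" using z mult_right_le_one_le[of z z] by (simp add: power2_eq_square)
  moreover have "(1-z)^2 \<le> 1-z" using z mult_right_le_one_le[of "1-z" "1-z"] by (simp add: power2_eq_square)
  moreover have "z^3 \<ge> 0" "(1-z)^3 \<ge> 0" using z by auto
  moreover have h: "0 \<le> 3/2 - (a+b)/2 + (c+d)/(3::real)" if "a \<le> z" "b \<le> 1-z" "0 \<le> c" "0 \<le> d" for a b c d
    using that by (simp add: field_simps)
  ultimately show ?thesis unfolding gq_def by blast
qed

lemma Hk_quant_int:
  assumes "\<not> k < p" "p > 0 \<longrightarrow> s > 0"
  shows "(\<integral>\<^sup>+z. Hk p s k z \<partial>coord_measure p s k) = ennreal (4/3)"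
proof -
  have hm: "Hk p s k \<in> borel_measurable lborel" using Hk_meas[OF assms(2)] by simp
  have "(\<integral>\<^sup>+z. Hk p s k z \<partial>coord_measure p s k) = (\<integral>\<^sup>+z. Hk p s k z * indicator {0..1} z \<partial>lborel)"
    unfolding coord_quant[OF assms(1)]
    using hm by (subst nn_integral_uniform_measure) (auto simp: divide_ennreal_def)
  also have "\<dots> = (\<integral>\<^sup>+z. ennreal (gq z) * indicator {0..1} z \<partial>lborel)"
    using assms by (intro nn_integral_cong) (auto simp: indicator_def Hk_quant)
  also have "\<dots> = ennreal ((3/2*1 - 1^3/6 + (1-1)^3/6 + 1^4/12 - (1-1)^4/12) - (3/2*0 - 0^3/6 + (1-0)^3/6 + 0^4/12 - (1-0)^4/12))"
  proof (rule nn_integral_FTC_Icc[where F = "\<lambda>z. 3/2*z - z^3/6 + (1-z)^3/6 + z^4/12 - (1-z)^4/12"])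
    show "gq \<in> borel_measurable borel" unfolding gq_def[abs_def] by simp
    show "((\<lambda>z. 3/2*z - z^3/6 + (1-z)^3/6 + z^4/12 - (1-z)^4/12) has_real_derivative gq z) (at z)" for z
      unfolding gq_def by (auto intro!: derivative_eq_intros simp: field_simps power2_eq_square power3_eq_cube power4_eq_xxxx)
    show "z \<in> {0..1} \<Longrightarrow> 0 \<le> gq z" for z using gq_nonneg by auto
  qed auto
  also have "\<dots> = ennreal (4/3)" by simp
  finally show ?thesis .
qed


lemma F_prob:
  assumes "p > 0 \<longrightarrow> s > 0"
  shows "prob_space (F_QQ p q s)"
  unfolding F_QQ_def by (intro prob_space_PiM coord_prob[OF assms])

lemma inner_prod:
  assumes sp: "p > 0 \<longrightarrow> s > 0"
  shows "(\<integral>\<^sup>+t. ennreal (kernel_QQ p q t z) \<partial>F_QQ p q s) = (\<Prod>k\<in>{0..<p+q}. Hk p s k (z k))"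
proof -
  interpret P: product_sigma_finite "coord_measure p s"
    unfolding product_sigma_finite_def using coord_prob[OF sp] by (simp add: prob_space_imp_sigma_finite)
  have "(\<integral>\<^sup>+t. ennreal (kernel_QQ p q t z) \<partial>F_QQ p q s)
      = (\<integral>\<^sup>+t. (\<Prod>k\<in>{0..<p+q}. ennreal (kq p k (t k) (z k))) \<partial>F_QQ p q s)"
    unfolding kernel_eq by (intro nn_integral_cong) (simp add: prod_ennreal kq_nonneg)
  also have "\<dots> = (\<Prod>k\<in>{0..<p+q}. Hk p s k (z k))"
    unfolding F_QQ_def Hk_def
    by (rule P.product_nn_integral_prod)
       (auto intro!: measurable_compose[OF _ measurable_ennreal] kq_meas[OF coord_borel])
  finally show ?thesis .
qed

lemma prod_split_pq:
  "(\<Prod>k\<in>{0..<p+q}. (if k < p then a else b)) = a^p * (b::'a::comm_monoid_mult)^q"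
proof -
  have "{0..<p+q} = {0..<p} \<union> {p..<p+q}" by auto
  then have "(\<Prod>k\<in>{0..<p+q}. (if k < p then a else b)) = (\<Prod>k\<in>{0..<p}. (if k < p then a else b)) * (\<Prod>k\<in>{p..<p+q}. (if k < p then a else b))"
    by (simp add: prod.union_disjoint)
  also have "\<dots> = a^p * b^q" by simp
  finally show ?thesis .
qed

lemma T1_val:
  assumes sp: "p > 0 \<longrightarrow> s > 0"
  shows "integral\<^sup>L (F_QQ p q s \<Otimes>\<^sub>M F_QQ p q s) (\<lambda>(t, z). kernel_QQ p q t z) = Aq s ^ p * (4/3)^q"
proof -
  interpret P: product_sigma_finite "coord_measure p s"
    unfolding product_sigma_finite_def using coord_prob[OF sp] by (simp add: prob_space_imp_sigma_finite)
  interpret FF: pair_sigma_finite "F_QQ p q s" "F_QQ p q s"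
    unfolding pair_sigma_finite_def using F_prob[OF sp] by (simp add: prob_space_imp_sigma_finite)
  have Km: "(\<lambda>(t, z). kernel_QQ p q t z) \<in> borel_measurable (F_QQ p q s \<Otimes>\<^sub>M F_QQ p q s)"
  proof -
    have "(\<lambda>w. \<Prod>k\<in>{0..<p+q}. kq p k (fst w k) (snd w k)) \<in> borel_measurable (F_QQ p q s \<Otimes>\<^sub>M F_QQ p q s)"
      by (intro borel_measurable_prod kq_meas measurable_compose[OF measurable_fst comp_meas]
            measurable_compose[OF measurable_snd comp_meas]) auto
    then show ?thesis by (simp add: split_beta' kernel_eq)
  qed
  have "(\<integral>\<^sup>+w. ennreal ((\<lambda>(t, z). kernel_QQ p q t z) w) \<partial>(F_QQ p q s \<Otimes>\<^sub>M F_QQ p q s))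
      = (\<integral>\<^sup>+z. (\<integral>\<^sup>+t. ennreal (kernel_QQ p q t z) \<partial>F_QQ p q s) \<partial>F_QQ p q s)"
    using Km by (subst FF.nn_integral_snd[symmetric]) (auto simp: split_beta')
  also have "\<dots> = (\<integral>\<^sup>+z. (\<Prod>k\<in>{0..<p+q}. Hk p s k (z k)) \<partial>F_QQ p q s)"
    by (simp add: inner_prod[OF sp])
  also have "\<dots> = (\<Prod>k\<in>{0..<p+q}. (\<integral>\<^sup>+z. Hk p s k z \<partial>coord_measure p s k))"
    unfolding F_QQ_def
    by (rule P.product_nn_integral_prod)
       (auto intro!: measurable_compose[OF coord_borel Hk_meas[OF sp]])
  also have "\<dots> = (\<Prod>k\<in>{0..<p+q}. ennreal (if k < p then Aq s else 4/3))"
    using sp by (intro prod.cong refl) (auto simp: Hk_qual_int Hk_quant_int)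
  also have "\<dots> = ennreal (Aq s ^ p * (4/3)^q)"
    by (subst prod_ennreal) (auto simp: Aq_def prod_split_pq)
  finally have nn: "(\<integral>\<^sup>+w. ennreal ((\<lambda>(t, z). kernel_QQ p q t z) w) \<partial>(F_QQ p q s \<Otimes>\<^sub>M F_QQ p q s))
      = ennreal (Aq s ^ p * (4/3)^q)" .
  have "has_bochner_integral (F_QQ p q s \<Otimes>\<^sub>M F_QQ p q s) (\<lambda>(t, z). kernel_QQ p q t z) (Aq s ^ p * (4/3)^q)"
    by (rule has_bochner_integral_nn_integral[OF Km _ _ nn])
       (auto simp: kernel_eq kq_nonneg prod_nonneg Aq_def split_beta')
  then show ?thesis by (rule has_bochner_integral_integral_eq)
qed

lemma T2_val:
  assumes sp: "p > 0 \<longrightarrow> s > 0"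
    and z1: "\<And>k. k < p \<Longrightarrow> z k \<in> real ` {0..<s}"
    and z2: "\<And>k. p \<le> k \<Longrightarrow> k < p + q \<Longrightarrow> z k \<in> {1/4, 3/4}"
  shows "integral\<^sup>L (F_QQ p q s) (\<lambda>t. kernel_QQ p q t z) = Aq s ^ p * (4/3)^q"
proof -
  have Km: "(\<lambda>t. kernel_QQ p q t z) \<in> borel_measurable (F_QQ p q s)"
    unfolding kernel_eq
    by (intro borel_measurable_prod kq_meas comp_meas) auto
  have "(\<integral>\<^sup>+t. ennreal (kernel_QQ p q t z) \<partial>F_QQ p q s) = (\<Prod>k\<in>{0..<p+q}. Hk p s k (z k))"
    by (rule inner_prod[OF sp])
  also have "\<dots> = (\<Prod>k\<in>{0..<p+q}. ennreal (if k < p then Aq s else 4/3))"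
  proof (intro prod.cong refl)
    fix k assume k: "k \<in> {0..<p+q}"
    show "Hk p s k (z k) = ennreal (if k < p then Aq s else 4/3)"
    proof (cases "k < p")
      case True
      then have "s > 0" using sp by auto
      then show ?thesis using True z1 by (simp add: Hk_qual)
    next
      case False
      then have "z k \<in> {1/4, 3/4}" using z2 k by auto
      moreover have "gq (1/4) = 4/3" "gq (3/4) = 4/3" by (simp_all add: gq_def power2_eq_square power3_eq_cube)
      ultimately have "gq (z k) = 4/3" by (metis empty_iff insert_iff)
      moreover have "0 \<le> z k" "z k \<le> 1" using \<open>z k \<in> {1/4, 3/4}\<close> by auto
      ultimately show ?thesis using False by (simp add: Hk_quant)
    qed
  qed
  also have "\<dots> = ennreal (Aq s ^ p * (4/3)^q)"
    by (subst prod_ennreal) (auto simp: Aq_def prod_split_pq)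
  finally have nn: "(\<integral>\<^sup>+t. ennreal (kernel_QQ p q t z) \<partial>F_QQ p q s) = ennreal (Aq s ^ p * (4/3)^q)" .
  have "has_bochner_integral (F_QQ p q s) (\<lambda>t. kernel_QQ p q t z) (Aq s ^ p * (4/3)^q)"
    by (rule has_bochner_integral_nn_integral[OF Km _ _ nn])
       (auto simp: kernel_eq kq_nonneg prod_nonneg Aq_def)
  then show ?thesis by (rule has_bochner_integral_integral_eq)
qed

lemma sum_if_card: "finite A \<Longrightarrow> (\<Sum>j\<in>A. if P j then 1 else 0 :: real) = real (card {j\<in>A. P j})"
  by (simp add: sum.If_cases Int_def conj_commute)

lemma int_consec: "0 \<le> (m::int) * (m - 1)"
proof (cases "m \<le> 0")
  case True then show ?thesis by (simp add: mult_nonpos_nonpos)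
next
  case False then show ?thesis by simp
qed

lemma cell_bound:
  fixes f :: "nat \<Rightarrow> 'a"
  assumes C: "finite C" "f ` {..<n} \<subseteq> C" "card C = N" "N > 0"
  shows "real n^2 / N + real (n mod N) * (1 - real (n mod N) / N)
         \<le> (\<Sum>i<n. \<Sum>j<n. if f i = f j then 1 else 0 :: real)"
proof -
  define cnt where "cnt c = card {i\<in>{..<n}. f i = c}" for c
  have row: "(\<Sum>j<n. if f i = f j then 1 else 0 :: real) = real (cnt (f i))" for i
    unfolding cnt_def by (subst sum_if_card) (auto simp: eq_commute)
  have "(\<Sum>i<n. \<Sum>j<n. if f i = f j then 1 else 0 :: real) = (\<Sum>i<n. real (cnt (f i)))"
    by (simp add: row)
  also have "\<dots> = (\<Sum>c\<in>C. \<Sum>i\<in>{i\<in>{..<n}. f i = c}. real (cnt (f i)))"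
    using C by (intro sum.group[symmetric]) auto
  also have "\<dots> = (\<Sum>c\<in>C. real (cnt c)^2)"
    by (intro sum.cong refl) (simp add: cnt_def power2_eq_square)
  finally have S2: "(\<Sum>i<n. \<Sum>j<n. if f i = f j then 1 else 0 :: real) = (\<Sum>c\<in>C. real (cnt c)^2)" .
  have "real n = (\<Sum>i<n. 1::real)" by simp
  also have "\<dots> = (\<Sum>c\<in>C. \<Sum>i\<in>{i\<in>{..<n}. f i = c}. 1::real)"
    using C by (intro sum.group[symmetric]) auto
  also have "\<dots> = (\<Sum>c\<in>C. real (cnt c))"
    by (simp add: cnt_def)
  finally have S1: "real n = (\<Sum>c\<in>C. real (cnt c))" .
  define q where "q = n div N"
  define r where "r = n mod N"
  have nqr: "real n = real N * real q + real r"
    unfolding q_def r_def by (metis div_mult_mod_eq of_nat_add of_nat_mult mult.commute)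
  have each: "0 \<le> (real (cnt c) - real q) * (real (cnt c) - real q - 1)" for c
  proof -
    have "0 \<le> real_of_int ((int (cnt c) - int q) * (int (cnt c) - int q - 1))"
      using int_consec[of "int (cnt c) - int q"] by (simp only: of_int_0_le_iff)
    then show ?thesis by simp
  qed
  have "0 \<le> (\<Sum>c\<in>C. (real (cnt c) - real q) * (real (cnt c) - real q - 1))"
    by (intro sum_nonneg each)
  also have "\<dots> = (\<Sum>c\<in>C. real (cnt c)^2) - (2 * real q + 1) * (\<Sum>c\<in>C. real (cnt c)) + real N * real q * (real q + 1)"
    using C by (simp add: algebra_simps power2_eq_square sum.distrib sum_subtractf sum_distrib_left)
  finally have ineq0: "0 \<le> (\<Sum>c\<in>C. real (cnt c)^2) - (2 * real q + 1) * (\<Sum>c\<in>C. real (cnt c)) + real N * real q * (real q + 1)" .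
  have ineq: "(2 * real q + 1) * real n - real N * real q * (real q + 1) \<le> (\<Sum>c\<in>C. real (cnt c)^2)"
    unfolding S1 using ineq0 by linarith
  have "real n^2 / N + real r * (1 - real r / N) = (2 * real q + 1) * real n - real N * real q * (real q + 1)"
    using C(4) unfolding nqr by (simp add: field_simps power2_eq_square)
  with ineq S2 show ?thesis unfolding r_def by simp
qed


lemma pow_card_sum:
  assumes "finite P"
  shows "(\<Sum>A\<in>Pow P. u (card A)) = (\<Sum>a\<le>card P. real (card P choose a) * (u a :: real))"
proof -
  have "(\<Sum>A\<in>Pow P. u (card A)) = (\<Sum>a\<le>card P. \<Sum>A\<in>{A\<in>Pow P. card A = a}. u (card A))"
    using assms by (intro sum.group[symmetric]) (auto simp: card_mono)
  also have "\<dots> = (\<Sum>a\<le>card P. real (card P choose a) * u a)"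
  proof (intro sum.cong refl)
    fix a
    have "{A\<in>Pow P. card A = a} = {B. B \<subseteq> P \<and> card B = a}" by auto
    then have "card {A\<in>Pow P. card A = a} = card P choose a" using n_subsets[OF assms] by simp
    then show "(\<Sum>A\<in>{A\<in>Pow P. card A = a}. u (card A)) = real (card P choose a) * u a"
      by simp
  qed
  finally show ?thesis .
qed

lemma subset_split_sum:
  assumes "finite P" "finite Q" "P \<inter> Q = {}"
  shows "(\<Sum>S\<in>Pow (P \<union> Q). h (card (S \<inter> P)) (card (S \<inter> Q)))
       = (\<Sum>a\<le>card P. \<Sum>b\<le>card Q. real (card P choose a) * real (card Q choose b) * (h a b :: real))"
proof -
  have bij: "bij_betw (\<lambda>(A, B). A \<union> B) (Pow P \<times> Pow Q) (Pow (P \<union> Q))"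
  proof (rule bij_betw_byWitness[where f' = "\<lambda>S. (S \<inter> P, S \<inter> Q)"])
  qed (use assms in auto)
  have "(\<Sum>S\<in>Pow (P \<union> Q). h (card (S \<inter> P)) (card (S \<inter> Q)))
      = (\<Sum>AB\<in>Pow P \<times> Pow Q. h (card ((case AB of (A, B) \<Rightarrow> A \<union> B) \<inter> P)) (card ((case AB of (A, B) \<Rightarrow> A \<union> B) \<inter> Q)))"
    using sum.reindex_bij_betw[OF bij, of "\<lambda>S. h (card (S \<inter> P)) (card (S \<inter> Q))"] by simp
  also have "\<dots> = (\<Sum>AB\<in>Pow P \<times> Pow Q. h (card (fst AB)) (card (snd AB)))"
  proof (intro sum.cong refl)
    fix AB assume "AB \<in> Pow P \<times> Pow Q"
    then obtain A B where AB: "AB = (A, B)" "A \<subseteq> P" "B \<subseteq> Q" by auto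
    then have "(A \<union> B) \<inter> P = A" "(A \<union> B) \<inter> Q = B" using assms(3) by auto
    then show "h (card ((case AB of (A, B) \<Rightarrow> A \<union> B) \<inter> P)) (card ((case AB of (A, B) \<Rightarrow> A \<union> B) \<inter> Q))
        = h (card (fst AB)) (card (snd AB))" using AB by simp
  qed
  also have "\<dots> = (\<Sum>A\<in>Pow P. \<Sum>B\<in>Pow Q. h (card A) (card B))"
    by (simp add: sum.cartesian_product split_beta')
  also have "\<dots> = (\<Sum>A\<in>Pow P. \<Sum>b\<le>card Q. real (card Q choose b) * h (card A) b)"
    using assms by (intro sum.cong refl pow_card_sum)
  also have "\<dots> = (\<Sum>a\<le>card P. real (card P choose a) * (\<Sum>b\<le>card Q. real (card Q choose b) * h a b))"
    by (rule pow_card_sum[OF assms(1), where u = "\<lambda>a. \<Sum>b\<le>card Q. real (card Q choose b) * h a b"])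
  also have "\<dots> = (\<Sum>a\<le>card P. \<Sum>b\<le>card Q. real (card P choose a) * real (card Q choose b) * h a b)"
    by (simp add: sum_distrib_left mult.assoc)
  finally show ?thesis .
qed

lemma tri_sum:
  fixes p q :: nat
  assumes "\<And>a b. a \<le> p + q \<Longrightarrow> b \<le> p + q \<Longrightarrow> (a > p \<or> b > q) \<Longrightarrow> F a b = (0::real)"
  shows "(\<Sum>a\<le>p. \<Sum>b\<le>q. F a b) = (\<Sum>k\<le>p+q. \<Sum>a\<le>k. F a (k - a))"
proof -
  have "(\<Sum>a\<le>p. \<Sum>b\<le>q. F a b) = (\<Sum>(a,b)\<in>{..p} \<times> {..q}. F a b)"
    by (simp add: sum.cartesian_product)
  also have "\<dots> = (\<Sum>(a,b)\<in>{(a,b). a + b \<le> p + q}. F a b)"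
  proof (rule sum.mono_neutral_left)
    show "finite {(a, b). a + b \<le> p + q}"
      by (rule finite_subset[of _ "{..p+q} \<times> {..p+q}"]) (auto simp: finite_cartesian_product)
    show "{..p} \<times> {..q} \<subseteq> {(a, b). a + b \<le> p + q}" by auto
    show "\<forall>x\<in>{(a, b). a + b \<le> p + q} - {..p} \<times> {..q}. (case x of (a, b) \<Rightarrow> F a b) = 0"
    proof
      fix x assume "x \<in> {(a, b). a + b \<le> p + q} - {..p} \<times> {..q}"
      then obtain a b where "x = (a, b)" "a + b \<le> p + q" "a > p \<or> b > q" by force
      then show "(case x of (a, b) \<Rightarrow> F a b) = 0" using assms[of a b] by simp
    qed
  qed
  also have "\<dots> = (\<Sum>k\<le>p+q. \<Sum>a\<le>k. F a (k - a))"
    by (rule sum.triangle_reindex_eq)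
  finally show ?thesis .
qed

lemma kq_factor:
  assumes "k < p \<or> (a \<in> {1/4, 3/4} \<and> b \<in> {1/4, 3/4})"
  shows "kq p k a b = 5/4 * ((if a = b then 1/5 else 0) + 1)"
proof (cases "k < p")
  case True then show ?thesis by (simp add: kq_def)
next
  case False
  then have ab: "a \<in> {1/4, 3/4}" "b \<in> {1/4, 3/4}" using assms by auto
  have "3/2 - \<bar>a - b\<bar> + \<bar>a - b\<bar>^2 = 5/4 * ((if a = b then 1/5 else 0) + 1)"
  proof -
    have "a = 1/4 \<or> a = 3/4" "b = 1/4 \<or> b = 3/4" using ab by auto
    then show ?thesis by (elim disjE; hypsubst; simp add: power2_eq_square)
  qed
  then show ?thesis using False by (simp add: kq_def)
qed

lemma prod_if_const:
  assumes "finite S"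
  shows "(\<Prod>k\<in>S. if P k then (c::real) else 0) = c ^ card S * (if \<forall>k\<in>S. P k then 1 else 0)"
proof (cases "\<forall>k\<in>S. P k")
  case True then show ?thesis by simp
next
  case False
  then obtain k where "k \<in> S" "\<not> P k" by auto
  then show ?thesis using assms False by (auto intro!: prod_zero)
qed

lemma K_expand:
  assumes "\<And>k. p \<le> k \<Longrightarrow> k < p + q \<Longrightarrow> z k \<in> {1/4, 3/4} \<and> z' k \<in> {1/4, 3/4}"
  shows "kernel_QQ p q z z' = (5/4)^(p+q) *
     (\<Sum>S\<in>Pow {0..<p+q}. (1/5)^card S * (if \<forall>k\<in>S. z k = z' k then 1 else 0))"
proof -
  let ?I = "{0..<p+q}"
  let ?e = "\<lambda>k. if z k = z' k then 1/5 else (0::real)"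
  have "kernel_QQ p q z z' = (\<Prod>k\<in>?I. 5/4 * (?e k + 1))"
    unfolding kernel_eq
  proof (intro prod.cong refl kq_factor)
    fix k assume "k \<in> ?I"
    then show "k < p \<or> (z k \<in> {1/4, 3/4} \<and> z' k \<in> {1/4, 3/4})" using assms[of k] by auto
  qed
  also have "\<dots> = (5/4)^(p+q) * (\<Prod>k\<in>?I. ?e k + 1)"
    unfolding prod.distrib by simp
  also have "(\<Prod>k\<in>?I. ?e k + 1) = (\<Sum>S\<in>Pow ?I. (\<Prod>k\<in>S. ?e k) * (\<Prod>k\<in>?I - S. 1))"
    by (rule prod_add) simp
  also have "\<dots> = (\<Sum>S\<in>Pow ?I. (1/5)^card S * (if \<forall>k\<in>S. z k = z' k then 1 else 0))"
  proof (intro sum.cong refl)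
    fix S assume "S \<in> Pow ?I"
    then have "finite S" by (auto intro: finite_subset)
    then show "(\<Prod>k\<in>S. ?e k) * (\<Prod>k\<in>?I - S. 1) = (1/5)^card S * (if \<forall>k\<in>S. z k = z' k then 1 else 0)"
      by (simp add: prod_if_const)
  qed
  finally show ?thesis .
qed


definition NS :: "nat \<Rightarrow> nat \<Rightarrow> nat set \<Rightarrow> nat" where
  "NS p s S = (\<Prod>k\<in>S. if k < p then s else 2)"

definition Rm :: "nat \<Rightarrow> nat \<Rightarrow> real" where
  "Rm n N = real (n mod N) * (1 - real (n mod N) / real N)"

definition Vset :: "nat \<Rightarrow> nat \<Rightarrow> nat \<Rightarrow> real set" where
  "Vset p s k = (if k < p then real ` {0..<s} else {1/4, 3/4})"

lemma card_Vset: "card (Vset p s k) = (if k < p then s else 2)"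
  by (simp add: Vset_def card_image)

lemma NS_pos: "p > 0 \<longrightarrow> s > 0 \<Longrightarrow> NS p s S > 0"
  unfolding NS_def by (cases "finite S") (auto intro!: prod_pos)

lemma T3_bound:
  fixes x :: "nat \<Rightarrow> nat \<Rightarrow> real"
  assumes sp: "p > 0 \<longrightarrow> s > 0"
    and xr1: "\<And>i k. i < n \<Longrightarrow> k < p \<Longrightarrow> x i k \<in> real ` {0..<s}"
    and xr2: "\<And>i k. i < n \<Longrightarrow> p \<le> k \<Longrightarrow> k < p + q \<Longrightarrow> x i k \<in> {1/4, 3/4}"
  shows "(5/4)^(p+q) * (\<Sum>S\<in>Pow {0..<p+q}. (1/5)^card S * (real n^2 / NS p s S + Rm n (NS p s S)))
         \<le> (\<Sum>i<n. \<Sum>j<n. kernel_QQ p q (x i) (x j))"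
proof -
  let ?I = "{0..<p+q}"
  let ?ind = "\<lambda>i j S. if \<forall>k\<in>S. x i k = x j k then 1 else (0::real)"
  have "(\<Sum>i<n. \<Sum>j<n. kernel_QQ p q (x i) (x j))
      = (\<Sum>i<n. \<Sum>j<n. (5/4)^(p+q) * (\<Sum>S\<in>Pow ?I. (1/5)^card S * ?ind i j S))"
    by (intro sum.cong refl K_expand) (auto dest: xr2)
  also have "\<dots> = (5/4)^(p+q) * (\<Sum>i<n. \<Sum>j<n. \<Sum>S\<in>Pow ?I. (1/5)^card S * ?ind i j S)"
    by (simp add: sum_distrib_left)
  also have "(\<Sum>i<n. \<Sum>j<n. \<Sum>S\<in>Pow ?I. (1/5)^card S * ?ind i j S)
      = (\<Sum>i<n. \<Sum>S\<in>Pow ?I. \<Sum>j<n. (1/5)^card S * ?ind i j S)"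
    by (intro sum.cong refl sum.swap)
  also have "\<dots> = (\<Sum>S\<in>Pow ?I. \<Sum>i<n. \<Sum>j<n. (1/5)^card S * ?ind i j S)"
    by (rule sum.swap)
  also have "\<dots> = (\<Sum>S\<in>Pow ?I. (1/5)^card S * (\<Sum>i<n. \<Sum>j<n. ?ind i j S))"
    by (simp add: sum_distrib_left)
  finally have eq: "(\<Sum>i<n. \<Sum>j<n. kernel_QQ p q (x i) (x j))
      = (5/4)^(p+q) * (\<Sum>S\<in>Pow ?I. (1/5)^card S * (\<Sum>i<n. \<Sum>j<n. ?ind i j S))" .
  have cb: "real n^2 / NS p s S + Rm n (NS p s S) \<le> (\<Sum>i<n. \<Sum>j<n. ?ind i j S)" if S: "S \<in> Pow ?I" for S
  proof -
    have fS: "finite S" using S by (auto intro: finite_subset)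
    have ind: "?ind i j S = (if restrict (x i) S = restrict (x j) S then 1 else 0)" for i j
      by (auto simp: fun_eq_iff restrict_def)
    have "real n^2 / NS p s S + Rm n (NS p s S)
        \<le> (\<Sum>i<n. \<Sum>j<n. if restrict (x i) S = restrict (x j) S then 1 else 0)"
      unfolding Rm_def
    proof (rule cell_bound)
      show "finite (PiE S (Vset p s))" using fS by (intro finite_PiE) (auto simp: Vset_def)
      show "(\<lambda>i. restrict (x i) S) ` {..<n} \<subseteq> PiE S (Vset p s)"
      proof (rule image_subsetI)
        fix i assume i: "i \<in> {..<n}"
        have "x i k \<in> Vset p s k" if k: "k \<in> S" for k
        proof (cases "k < p")
          case True then show ?thesis using xr1[of i k] i by (simp add: Vset_def)
        next
          case False
          have "k < p + q" using k S by auto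
          then show ?thesis using xr2[of i k] i False by (simp add: Vset_def)
        qed
        then show "restrict (x i) S \<in> PiE S (Vset p s)" by (simp add: restrict_PiE_iff)
      qed
      show "card (PiE S (Vset p s)) = NS p s S"
        using fS by (simp add: card_PiE card_Vset NS_def)
      show "NS p s S > 0" using NS_pos[OF sp] .
    qed
    then show ?thesis by (simp add: ind)
  qed
  have "(\<Sum>S\<in>Pow ?I. (1/5)^card S * (real n^2 / NS p s S + Rm n (NS p s S)))
      \<le> (\<Sum>S\<in>Pow ?I. (1/5)^card S * (\<Sum>i<n. \<Sum>j<n. ?ind i j S))"
    by (intro sum_mono mult_left_mono cb) auto
  then show ?thesis unfolding eq by (intro mult_left_mono) auto
qed


lemma partA:
  assumes sp: "p > 0 \<longrightarrow> s > 0"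
  shows "(5/4)^(p+q) * (\<Sum>S\<in>Pow {0..<p+q}. (1/5)^card S * (real n^2 / NS p s S))
       = real n^2 * (Aq s ^ p * (11/8)^q)"
proof -
  let ?I = "{0..<p+q}"
  define w where "w k = 1 / (5 * real (if k < p then s else 2::nat))" for k
  have ws: "(1/5)^card S * (real n^2 / NS p s S) = real n^2 * (\<Prod>k\<in>S. w k)" if "S \<in> Pow ?I" for S
  proof -
    have "(\<Prod>k\<in>S. w k) = (\<Prod>k\<in>S. (1/5) / real (if k < p then s else 2::nat))"
      unfolding w_def by (intro prod.cong refl) simp
    also have "\<dots> = (1/5)^card S / real (NS p s S)"
      by (simp only: prod_dividef prod_constant NS_def of_nat_prod) (simp add: power_divide)
    finally show ?thesis by simp
  qed
  have "(\<Sum>S\<in>Pow ?I. (1/5)^card S * (real n^2 / NS p s S)) = real n^2 * (\<Sum>S\<in>Pow ?I. \<Prod>k\<in>S. w k)"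
    unfolding sum_distrib_left by (intro sum.cong refl ws)
  also have "(\<Sum>S\<in>Pow ?I. \<Prod>k\<in>S. w k) = (\<Sum>S\<in>Pow ?I. (\<Prod>k\<in>S. w k) * (\<Prod>k\<in>?I - S. 1))"
    by simp
  also have "\<dots> = (\<Prod>k\<in>?I. w k + 1)"
    by (rule prod_add[symmetric]) simp
  also have "\<dots> = (\<Prod>k\<in>?I. if k < p then 1 / (5 * real s) + 1 else 11/10)"
    unfolding w_def by (intro prod.cong refl) auto
  also have "\<dots> = (1 / (5 * real s) + 1)^p * (11/10)^q"
    by (rule prod_split_pq)
  finally have e: "(\<Sum>S\<in>Pow ?I. (1/5)^card S * (real n^2 / NS p s S)) = real n^2 * ((1 / (5 * real s) + 1)^p * (11/10)^q)" .
  have "(5/4)^(p+q) * ((1 / (5 * real s) + 1)^p * (11/10)^q) = (5/4 * (1 / (5 * real s) + 1))^p * (5/4 * (11/10))^q"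
    by (simp only: power_add power_mult_distrib mult_ac)
  also have "\<dots> = Aq s ^ p * (11/8)^q"
  proof (cases "p = 0")
    case True then show ?thesis by simp
  next
    case False
    then have "s > 0" using sp by auto
    then have "5/4 * (1 / (5 * real s) + 1) = Aq s" by (simp add: Aq_def field_simps)
    then show ?thesis by simp
  qed
  finally show ?thesis using e by (simp add: mult.left_commute)
qed

lemma NS_split:
  assumes "S \<subseteq> {0..<p+q}"
  shows "NS p s S = s ^ card (S \<inter> {0..<p}) * 2 ^ card (S \<inter> {p..<p+q})"
    and "card S = card (S \<inter> {0..<p}) + card (S \<inter> {p..<p+q})"
proof -
  have fS: "finite S" using assms by (auto intro: finite_subset)
  have a: "S \<inter> {k. k < p} = S \<inter> {0..<p}" by auto
  have b: "S \<inter> - {k. k < p} = S \<inter> {p..<p+q}" using assms by auto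
  show "NS p s S = s ^ card (S \<inter> {0..<p}) * 2 ^ card (S \<inter> {p..<p+q})"
    unfolding NS_def using fS by (simp add: prod.If_cases a b)
  have eq: "S = (S \<inter> {0..<p}) \<union> (S \<inter> {p..<p+q})" using assms by auto
  have c1: "card S = card ((S \<inter> {0..<p}) \<union> (S \<inter> {p..<p+q}))" using eq by (rule arg_cong)
  have c2: "card ((S \<inter> {0..<p}) \<union> (S \<inter> {p..<p+q})) = card (S \<inter> {0..<p}) + card (S \<inter> {p..<p+q})"
    by (rule card_Un_disjoint) (use fS in auto)
  show "card S = card (S \<inter> {0..<p}) + card (S \<inter> {p..<p+q})"
    using c1 c2 by (rule trans)
qed

lemma partB:
  "(\<Sum>S\<in>Pow {0..<p+q}. (1/5)^card S * Rm n (NS p s S))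
   = (\<Sum>k=1..p+q. (1/5)^k * (\<Sum>k1=0..k.
          let k2 = k - k1; r = real (n mod (s^k1 * 2^k2)) in
          real (p choose k1) * real (q choose k2) * r * (1 - r / (real s^k1 * 2^k2))))"
proof -
  let ?P = "{0..<p}" and ?Q = "{p..<p+q}"
  define h where "h a b = (1/5::real)^(a+b) * Rm n (s^a * 2^b)" for a b
  have PQ: "?P \<union> ?Q = {0..<p+q}" by auto
  have "(\<Sum>S\<in>Pow {0..<p+q}. (1/5)^card S * Rm n (NS p s S))
      = (\<Sum>S\<in>Pow (?P \<union> ?Q). h (card (S \<inter> ?P)) (card (S \<inter> ?Q)))"
    unfolding PQ h_def by (intro sum.cong refl) (simp add: NS_split)
  also have "\<dots> = (\<Sum>a\<le>p. \<Sum>b\<le>q. real (p choose a) * real (q choose b) * h a b)"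
    using subset_split_sum[of ?P ?Q h] by simp
  also have "\<dots> = (\<Sum>k\<le>p+q. \<Sum>a\<le>k. real (p choose a) * real (q choose (k - a)) * h a (k - a))"
    by (rule tri_sum) auto
  also have "\<dots> = (\<Sum>k\<in>{0..p+q}. (1/5)^k * (\<Sum>k1=0..k.
          let k2 = k - k1; r = real (n mod (s^k1 * 2^k2)) in
          real (p choose k1) * real (q choose k2) * r * (1 - r / (real s^k1 * 2^k2))))"
    unfolding atMost_atLeast0
    by (intro sum.cong refl) (auto simp: sum_distrib_left h_def Rm_def Let_def mult_ac intro!: sum.cong)
  also have "\<dots> = (\<Sum>k=1..p+q. (1/5)^k * (\<Sum>k1=0..k.
          let k2 = k - k1; r = real (n mod (s^k1 * 2^k2)) in
          real (p choose k1) * real (q choose k2) * r * (1 - r / (real s^k1 * 2^k2))))"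
    by (subst sum.atLeast_Suc_atMost) simp_all
  finally show ?thesis .
qed


theorem theorem5:
  fixes n p q s :: nat and D1 D2 :: "nat \<Rightarrow> nat \<Rightarrow> nat"
  assumes "n > 0"
    and "in_U n s p D1"
    and "in_U n 2 q D2"
  shows "QQD2 n p q s D1 D2 \<ge> LB2 n p q s"
proof -
  define x where "x = design_point p q D1 D2"
  have D1r: "D1 i k < s" if "i < n" "k < p" for i k
    using assms(2) that unfolding in_U_def balanced_col_def by auto
  have D2r: "D2 i j < 2" if "i < n" "j < q" for i j
    using assms(3) that unfolding in_U_def balanced_col_def by auto
  have sp: "p > 0 \<longrightarrow> s > 0"
    using D1r[of 0 0] assms(1) by auto
  have xr1: "x i k \<in> real ` {0..<s}" if "i < n" "k < p" for i k
    using D1r[OF that] that unfolding x_def design_point_def by auto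
  have xr2: "x i k \<in> {1/4, 3/4}" if "i < n" "p \<le> k" "k < p + q" for i k
  proof -
    have "D2 i (k - p) < 2" using D2r[of i "k - p"] that by auto
    then have "D2 i (k - p) = 0 \<or> D2 i (k - p) = 1" by auto
    then show ?thesis using that unfolding x_def design_point_def by auto
  qed
  define X where "X = Aq s ^ p * (4/3::real)^q"
  define BB where "BB = (\<Sum>k=1..p+q. (1/5::real)^k * (\<Sum>k1=0..k.
          let k2 = k - k1; r = real (n mod (s^k1 * 2^k2)) in
          real (p choose k1) * real (q choose k2) * r * (1 - r / (real s^k1 * 2^k2))))"
  define KK where "KK = (\<Sum>i<n. \<Sum>j<n. kernel_QQ p q (x i) (x j))"
  have t1: "integral\<^sup>L (F_QQ p q s \<Otimes>\<^sub>M F_QQ p q s) (\<lambda>(t, z). kernel_QQ p q t z) = X"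
    unfolding X_def by (rule T1_val[OF sp])
  have t2: "(\<Sum>i<n. integral\<^sup>L (F_QQ p q s) (\<lambda>t. kernel_QQ p q t (x i))) = real n * X"
  proof -
    have "(\<Sum>i<n. integral\<^sup>L (F_QQ p q s) (\<lambda>t. kernel_QQ p q t (x i))) = (\<Sum>i<n. X)"
      unfolding X_def by (intro sum.cong refl T2_val[OF sp] xr1 xr2) auto
    then show ?thesis by simp
  qed
  have kk: "real n^2 * (Aq s ^ p * (11/8)^q) + (5/4)^(p+q) * BB \<le> KK"
  proof -
    have "(5/4)^(p+q) * (\<Sum>S\<in>Pow {0..<p+q}. (1/5)^card S * (real n^2 / NS p s S + Rm n (NS p s S))) \<le> KK"
      unfolding KK_def by (rule T3_bound[OF sp]) (rule xr1 xr2; assumption)+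
    moreover have "(5/4)^(p+q) * (\<Sum>S\<in>Pow {0..<p+q}. (1/5)^card S * (real n^2 / NS p s S + Rm n (NS p s S)))
        = (5/4)^(p+q) * (\<Sum>S\<in>Pow {0..<p+q}. (1/5)^card S * (real n^2 / NS p s S))
          + (5/4)^(p+q) * (\<Sum>S\<in>Pow {0..<p+q}. (1/5)^card S * Rm n (NS p s S))"
      by (simp add: distrib_left sum.distrib)
    moreover have "(5/4)^(p+q) * (\<Sum>S\<in>Pow {0..<p+q}. (1/5)^card S * (real n^2 / NS p s S)) = real n^2 * (Aq s ^ p * (11/8)^q)"
      by (rule partA[OF sp])
    moreover have "(\<Sum>S\<in>Pow {0..<p+q}. (1/5)^card S * Rm n (NS p s S)) = BB"
      unfolding BB_def by (rule partB)
    ultimately show ?thesis by simp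
  qed
  have Q: "QQD2 n p q s D1 D2 = X - 2 / real n * (real n * X) + 1 / (real n)^2 * KK"
    unfolding QQD2_def Let_def x_def[symmetric] KK_def t1 t2 ..
  have L: "LB2 n p q s = - X + Aq s ^ p * (11/8)^q + 1 / (real n)^2 * (5/4)^(p+q) * BB"
    unfolding LB2_def X_def BB_def Aq_def ..
  have np: "real n > 0" using assms(1) by simp
  have "1 / (real n)^2 * (real n^2 * (Aq s ^ p * (11/8)^q) + (5/4)^(p+q) * BB) \<le> 1 / (real n)^2 * KK"
    using kk np by (intro mult_left_mono) auto
  then have "Aq s ^ p * (11/8)^q + 1 / (real n)^2 * (5/4)^(p+q) * BB \<le> 1 / (real n)^2 * KK"
    using np by (simp add: field_simps)
  then show ?thesis unfolding Q L using np by simp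
qed

end
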